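(* Let $S$ be any shape having $k$ turning points and $l$ line segments, and let $i(S)$ be the incompressible shape obtained from $S$ by compressing all its compressible columns and rows. Then: (a) $i(S)$ has $k$ turning points and $l$ line segments; (b) there is a one-to-one correspondence between the turning points and line segments of $i(S)$ and those of $S$ such that $i(S)$ and $S$ are geometrically equivalent up to the lengths of their line segments, the length of each line segment of $i(S)$ is at most the length of the corresponding line segment of $S$, and the relative order of the turning points with respect to each other (in both coordinates) is the same in $S$ and $i(S)$; (c) $i(S)$ fits within a $k\times k$ square area of the grid.
   Context: A shape $S=(V,E)$ is a finite connected graph whose nodes occupy distinct integer grid points and whose edges join only nodes at orthogonal distance $1$. A node $u$ is a turning point of $S$ if $u$ is a leaf or $u$ has two neighbors $v_1,v_2$ with $v_1u$ perpendicular to $uv_2$. A line segment is a maximal straight path of $S$ between two turning points containing no other turning point. A column (row) of $S$ is a grid column (row) containing nodes of $S$; it is compressible if it contains no turning point of $S$ (then it contains no vertical (horizontal) edges and meets only horizontal (vertical) segments, each of which extends through it). For a maximal run $C_l,\dots,C_r$ of consecutive compressible columns, every horizontal segment $s$ meeting them has a node $u_{l-1}(s)$ in column $C_{l-1}$ and a node $u_{r+1}(s)$ in $C_{r+1}$; a compression operation deletes the nodes in columns $C_l,\dots,C_r$, shifts everything to the right of $C_r$ left by $r-l+1$ units, and joins $u_{l-1}(s)$ to $u_{r+1}(s)$ for each such $s$. Compression of rows is defined analogously. A shape is incompressible if it has no compressible columns or rows; $i(S)$ denotes the incompressible shape obtained by compressing all compressible columns and rows of $S$. *)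

theory Defs
  imports Main
begin

text \<open>Grid points are pairs of integers (column, row).  A shape is given by its
  node set V and its edge set E, an edge being a two-element set of nodes.\<close>

type_synonym gpt = "int \<times> int"

definition unit_dist :: "gpt \<Rightarrow> gpt \<Rightarrow> bool" where
  "unit_dist u v \<longleftrightarrow> \<bar>fst u - fst v\<bar> + \<bar>snd u - snd v\<bar> = 1"

definition edge_rel :: "gpt set set \<Rightarrow> (gpt \<times> gpt) set" where
  "edge_rel E = {(a, b). {a, b} \<in> E}"

definition is_shape :: "gpt set \<Rightarrow> gpt set set \<Rightarrow> bool" where
  "is_shape V E \<longleftrightarrow> finite V \<and> V \<noteq> {} \<and>
     (\<forall>e\<in>E. \<exists>u v. e = {u, v} \<and> u \<in> V \<and> v \<in> V \<and> unit_dist u v) \<and>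
     (\<forall>u\<in>V. \<forall>v\<in>V. (u, v) \<in> (edge_rel E)\<^sup>*)"

definition nbrs :: "gpt set set \<Rightarrow> gpt \<Rightarrow> gpt set" where
  "nbrs E u = {v. {u, v} \<in> E}"

definition turning :: "gpt set \<Rightarrow> gpt set set \<Rightarrow> gpt \<Rightarrow> bool" where
  "turning V E u \<longleftrightarrow> u \<in> V \<and>
     (card (nbrs E u) = 1 \<or>
      (\<exists>v1\<in>nbrs E u. \<exists>v2\<in>nbrs E u.
         (fst v1 - fst u) * (fst v2 - fst u) + (snd v1 - snd u) * (snd v2 - snd u) = 0))"

definition turning_points :: "gpt set \<Rightarrow> gpt set set \<Rightarrow> gpt set" where
  "turning_points V E = {u. turning V E u}"

text \<open>Grid distance and the t-th grid point on the straight line from u towards v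
  (meaningful when u and v share a row or a column).\<close>
definition gdist :: "gpt \<Rightarrow> gpt \<Rightarrow> nat" where
  "gdist u v = nat (\<bar>fst v - fst u\<bar> + \<bar>snd v - snd u\<bar>)"

definition line_pt :: "gpt \<Rightarrow> gpt \<Rightarrow> nat \<Rightarrow> gpt" where
  "line_pt u v t = (fst u + int t * sgn (fst v - fst u), snd u + int t * sgn (snd v - snd u))"

definition straight_path :: "gpt set set \<Rightarrow> gpt \<Rightarrow> gpt \<Rightarrow> bool" where
  "straight_path E u v \<longleftrightarrow> u \<noteq> v \<and> (fst u = fst v \<or> snd u = snd v) \<and>
     (\<forall>t < gdist u v. {line_pt u v t, line_pt u v (Suc t)} \<in> E)"

definition interior_pts :: "gpt \<Rightarrow> gpt \<Rightarrow> gpt set" where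
  "interior_pts u v = {line_pt u v t | t. 0 < t \<and> t < gdist u v}"

text \<open>Segments are unordered, so represented as sets {u, v};
  the length of the segment {u, v} is gdist u v.\<close>
definition is_segment :: "gpt set \<Rightarrow> gpt set set \<Rightarrow> gpt \<Rightarrow> gpt \<Rightarrow> bool" where
  "is_segment V E u v \<longleftrightarrow> turning V E u \<and> turning V E v \<and> straight_path E u v \<and>
     (\<forall>w\<in>interior_pts u v. \<not> turning V E w)"

definition line_segments :: "gpt set \<Rightarrow> gpt set set \<Rightarrow> gpt set set" where
  "line_segments V E = {{u, v} | u v. is_segment V E u v}"

definition comp_col :: "gpt set \<Rightarrow> gpt set set \<Rightarrow> int \<Rightarrow> bool" where
  "comp_col V E x \<longleftrightarrow> (\<exists>y. (x, y) \<in> V) \<and> (\<forall>y. \<not> turning V E (x, y))"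

definition comp_row :: "gpt set \<Rightarrow> gpt set set \<Rightarrow> int \<Rightarrow> bool" where
  "comp_row V E y \<longleftrightarrow> (\<exists>x. (x, y) \<in> V) \<and> (\<forall>x. \<not> turning V E (x, y))"

definition incompressible :: "gpt set \<Rightarrow> gpt set set \<Rightarrow> bool" where
  "incompressible V E \<longleftrightarrow> (\<forall>x. \<not> comp_col V E x) \<and> (\<forall>y. \<not> comp_row V E y)"

text \<open>Result of compressing all compressible columns and rows at once.
  Two surviving nodes are joined iff they are joined in S by a straight path all of
  whose interior nodes are deleted (this covers the original edges between surviving
  nodes, and the new edges u_{l-1}(s) u_{r+1}(s) joining across compressed runs).\<close>
definition survivor :: "gpt set \<Rightarrow> gpt set set \<Rightarrow> gpt \<Rightarrow> bool" where
  "survivor V E p \<longleftrightarrow> p \<in> V \<and> \<not> comp_col V E (fst p) \<and> \<not> comp_row V E (snd p)"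

definition cmap :: "gpt set \<Rightarrow> gpt set set \<Rightarrow> gpt \<Rightarrow> gpt" where
  "cmap V E p = (fst p - int (card {c. c < fst p \<and> comp_col V E c}),
                 snd p - int (card {r. r < snd p \<and> comp_row V E r}))"

definition compress_all :: "gpt set \<Rightarrow> gpt set set \<Rightarrow> gpt set \<times> gpt set set" where
  "compress_all V E =
     (cmap V E ` {p. survivor V E p},
      {{cmap V E p, cmap V E q} | p q. survivor V E p \<and> survivor V E q \<and>
          straight_path E p q \<and> (\<forall>w\<in>interior_pts p q. \<not> survivor V E w)})"

end

theory Submission
  imports Defs
begin


definition cnt :: "(int \<Rightarrow> bool) \<Rightarrow> int \<Rightarrow> int" where
  "cnt P x = x - int (card {c. c < x \<and> P c})"

lemma cnt_diff:
  assumes fin: "finite {c. P c}" and ab: "a \<le> b"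
  shows "cnt P b - cnt P a = int (card {c. a \<le> c \<and> c < b \<and> \<not> P c})"
proof -
  have f1: "finite {c. c < a \<and> P c}" "finite {c. a \<le> c \<and> c < b \<and> P c}"
    using fin by (auto intro: finite_subset)
  have "{c. c < b \<and> P c} = {c. c < a \<and> P c} \<union> {c. a \<le> c \<and> c < b \<and> P c}"
    using ab by auto
  hence e1: "card {c. c < b \<and> P c} = card {c. c < a \<and> P c} + card {c. a \<le> c \<and> c < b \<and> P c}"
    using f1 by (simp add: card_Un_disjoint disjoint_iff)
  have "{a..<b} = {c. a \<le> c \<and> c < b \<and> P c} \<union> {c. a \<le> c \<and> c < b \<and> \<not> P c}" by auto
  hence "card {a..<b} = card {c. a \<le> c \<and> c < b \<and> P c} + card {c. a \<le> c \<and> c < b \<and> \<not> P c}"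
    by (subst card_Un_disjoint[symmetric]) (auto intro: finite_subset[of _ "{a..<b}"])
  hence "nat (b - a) = card {c. a \<le> c \<and> c < b \<and> P c} + card {c. a \<le> c \<and> c < b \<and> \<not> P c}" by simp
  thus ?thesis using e1 ab unfolding cnt_def by linarith
qed

lemma cnt_mono: "finite {c. P c} \<Longrightarrow> a \<le> b \<Longrightarrow> cnt P a \<le> cnt P b"
  using cnt_diff[of P a b] by simp

lemma cnt_lip: "finite {c. P c} \<Longrightarrow> a \<le> b \<Longrightarrow> cnt P b - cnt P a \<le> b - a"
proof -
  assume f: "finite {c. P c}" and ab: "a \<le> b"
  have "card {c. a \<le> c \<and> c < b \<and> \<not> P c} \<le> card {a..<b}"
    by (rule card_mono) auto
  thus ?thesis using cnt_diff[OF f ab] ab by simp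
qed

lemma cnt_strict: "finite {c. P c} \<Longrightarrow> a < b \<Longrightarrow> \<not> P a \<Longrightarrow> cnt P a < cnt P b"
proof -
  assume f: "finite {c. P c}" and ab: "a < b" and na: "\<not> P a"
  have "a \<in> {c. a \<le> c \<and> c < b \<and> \<not> P c}" using ab na by auto
  hence "card {c. a \<le> c \<and> c < b \<and> \<not> P c} > 0"
    by (subst card_gt_0_iff) (auto intro: finite_subset[of _ "{a..<b}"])
  thus ?thesis using cnt_diff[OF f, of a b] ab by simp
qed

lemma cnt_less_iff: "finite {c. P c} \<Longrightarrow> \<not> P a \<Longrightarrow> \<not> P b \<Longrightarrow> cnt P a < cnt P b \<longleftrightarrow> a < b"
  by (metis cnt_mono cnt_strict linorder_not_le order.strict_iff_order)

lemma cnt_le_iff: "finite {c. P c} \<Longrightarrow> \<not> P a \<Longrightarrow> \<not> P b \<Longrightarrow> cnt P a \<le> cnt P b \<longleftrightarrow> a \<le> b"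
  using cnt_less_iff[of P b a] by linarith

lemma cnt_eq_iff: "finite {c. P c} \<Longrightarrow> \<not> P a \<Longrightarrow> \<not> P b \<Longrightarrow> cnt P a = cnt P b \<longleftrightarrow> a = b"
  using cnt_le_iff[of P a b] cnt_le_iff[of P b a] by auto

lemma cnt_step: "finite {c. P c} \<Longrightarrow> cnt P (x+1) = cnt P x + (if P x then 0 else 1)"
proof -
  assume f: "finite {c. P c}"
  have "{c. x \<le> c \<and> c < x + 1 \<and> \<not> P c} = (if P x then {} else {x})" by auto
  thus ?thesis using cnt_diff[OF f, of x "x+1"] by (auto split: if_splits)
qed

lemma cnt_next2:
  assumes f: "finite {c. P c}" and "a < b" "\<not> P a" "\<forall>c. a < c \<and> c < b \<longrightarrow> P c"
  shows "cnt P b = cnt P a + 1"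
proof -
  have "{c. a \<le> c \<and> c < b \<and> \<not> P c} = {a}" using assms by force
  thus ?thesis using cnt_diff[OF f, of a b] assms by simp
qed

lemma cnt_next:
  assumes f: "finite {c. P c}" and "a < b" "\<not> P a" "\<not> P b" "cnt P b = cnt P a + 1" "a < c" "c < b"
  shows "P c"
  using assms cnt_strict[OF f, of a c] cnt_strict[OF f, of c b] by (cases "P c") auto

lemma cnt_ivt:
  assumes f: "finite {c. P c}" and ab: "a \<le> b" and X: "cnt P a \<le> X" "X < cnt P b"
  shows "\<exists>x. a \<le> x \<and> x < b \<and> \<not> P x \<and> cnt P x = X"
proof -
  define S where "S = {c. a \<le> c \<and> c \<le> b \<and> cnt P c \<le> X}"
  have fS: "finite S" unfolding S_def by (rule finite_subset[of _ "{a..b}"]) auto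
  have aS: "a \<in> S" unfolding S_def using ab X by auto
  define x where "x = Max S"
  have xS: "x \<in> S" unfolding x_def using fS aS Max_in by blast
  have xb: "x < b" using xS X unfolding S_def by (cases "x = b") auto
  have "x + 1 \<notin> S" using Max_ge[OF fS] unfolding x_def by fastforce
  hence "cnt P (x+1) > X" using xS xb unfolding S_def by auto
  with cnt_step[OF f, of x] xS have "\<not> P x \<and> cnt P x = X" unfolding S_def
    by (auto split: if_splits)
  thus ?thesis using xS xb unfolding S_def by auto
qed

lemma exists_next:
  fixes P :: "int \<Rightarrow> bool"
  assumes f: "finite {c. P c}"
  shows "\<exists>b>a. \<not> P b \<and> (\<forall>c. a < c \<and> c < b \<longrightarrow> P c)"
proof -
  define M where "M = Max ({c. P c} \<union> {a}) + 1"
  have fM: "finite ({c. P c} \<union> {a})" using f by simp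
  have M1: "a < M" unfolding M_def using Max_ge[OF fM, of a] by auto
  have M2: "\<not> P M" unfolding M_def using Max_ge[OF fM, of "Max ({c. P c} \<union> {a}) + 1"] by auto
  define S where "S = {c. a < c \<and> c \<le> M \<and> \<not> P c}"
  have fS: "finite S" unfolding S_def by (rule finite_subset[of _ "{a..M}"]) auto
  have MS: "M \<in> S" unfolding S_def using M1 M2 by auto
  define b where "b = Min S"
  have bS: "b \<in> S" unfolding b_def using fS MS Min_in by blast
  have "\<forall>c. a < c \<and> c < b \<longrightarrow> P c"
  proof (intro allI impI)
    fix c assume c: "a < c \<and> c < b"
    show "P c"
    proof (rule ccontr)
      assume "\<not> P c"
      hence "c \<in> S" using c bS unfolding S_def by auto
      hence "b \<le> c" unfolding b_def using Min_le[OF fS] by blast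
      thus False using c by simp
    qed
  qed
  thus ?thesis using bS unfolding S_def by auto
qed

lemma exists_prev:
  fixes P :: "int \<Rightarrow> bool"
  assumes f: "finite {c. P c}"
  shows "\<exists>b<a. \<not> P b \<and> (\<forall>c. b < c \<and> c < a \<longrightarrow> P c)"
proof -
  define M where "M = Min ({c. P c} \<union> {a}) - 1"
  have fM: "finite ({c. P c} \<union> {a})" using f by simp
  have M1: "M < a" unfolding M_def using Min_le[OF fM, of a] by auto
  have M2: "\<not> P M" unfolding M_def using Min_le[OF fM, of "Min ({c. P c} \<union> {a}) - 1"] by auto
  define S where "S = {c. M \<le> c \<and> c < a \<and> \<not> P c}"
  have fS: "finite S" unfolding S_def by (rule finite_subset[of _ "{M..a}"]) auto
  have MS: "M \<in> S" unfolding S_def using M1 M2 by auto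
  define b where "b = Max S"
  have bS: "b \<in> S" unfolding b_def using fS MS Max_in by blast
  have "\<forall>c. b < c \<and> c < a \<longrightarrow> P c"
  proof (intro allI impI)
    fix c assume c: "b < c \<and> c < a"
    show "P c"
    proof (rule ccontr)
      assume "\<not> P c"
      hence "c \<in> S" using c bS unfolding S_def by auto
      hence "c \<le> b" unfolding b_def using Max_ge[OF fS] by blast
      thus False using c by simp
    qed
  qed
  thus ?thesis using bS unfolding S_def by auto
qed


lemma unit_dist_iff:
  "unit_dist u v \<longleftrightarrow> v = (fst u + 1, snd u) \<or> v = (fst u - 1, snd u) \<or> v = (fst u, snd u + 1) \<or> v = (fst u, snd u - 1)"
  by (cases u; cases v) (auto simp: unit_dist_def abs_if prod_eq_iff; arith)

definition Dset :: "gpt set set \<Rightarrow> gpt \<Rightarrow> gpt set" where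
  "Dset E u = {d. {u, (fst u + fst d, snd u + snd d)} \<in> E}"

lemma turning_D:
  "turning V E u \<longleftrightarrow> u \<in> V \<and> (card (Dset E u) = 1 \<or>
     (\<exists>d1\<in>Dset E u. \<exists>d2\<in>Dset E u. fst d1 * fst d2 + snd d1 * snd d2 = 0))"
proof -
  define tr where "tr = (\<lambda>d::gpt. (fst u + fst d, snd u + snd d))"
  have inj: "inj tr" unfolding tr_def inj_def by (auto simp: prod_eq_iff)
  have nb: "nbrs E u = tr ` Dset E u"
  proof
    show "nbrs E u \<subseteq> tr ` Dset E u"
    proof
      fix v assume "v \<in> nbrs E u"
      hence "(fst v - fst u, snd v - snd u) \<in> Dset E u" "v = tr (fst v - fst u, snd v - snd u)"
        unfolding nbrs_def Dset_def tr_def by auto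
      thus "v \<in> tr ` Dset E u" by blast
    qed
    show "tr ` Dset E u \<subseteq> nbrs E u" unfolding nbrs_def Dset_def tr_def by auto
  qed
  have c: "card (nbrs E u) = card (Dset E u)"
    unfolding nb using inj by (simp add: card_image inj_on_subset)
  have e: "(\<exists>v1\<in>nbrs E u. \<exists>v2\<in>nbrs E u.
         (fst v1 - fst u) * (fst v2 - fst u) + (snd v1 - snd u) * (snd v2 - snd u) = 0)
     \<longleftrightarrow> (\<exists>d1\<in>Dset E u. \<exists>d2\<in>Dset E u. fst d1 * fst d2 + snd d1 * snd d2 = 0)"
    unfolding nb by (auto simp: tr_def)
  show ?thesis unfolding turning_def c e ..
qed

lemma turning_transfer:
  "u \<in> V \<Longrightarrow> u' \<in> V' \<Longrightarrow> Dset E u = Dset E' u' \<Longrightarrow> turning V E u \<longleftrightarrow> turning V' E' u'"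
  by (simp add: turning_D)

definition units :: "gpt set" where "units = {(1,0),(-1,0),(0,1),(0,-1)}"

lemma cont:
  assumes nt: "\<not> turning V E w" and wV: "w \<in> V" and un: "Dset E w \<subseteq> units"
    and d: "d \<in> units" and md: "(- fst d, - snd d) \<in> Dset E w"
  shows "d \<in> Dset E w"
proof (rule ccontr)
  assume nd: "d \<notin> Dset E w"
  have np: "\<not> (\<exists>d1\<in>Dset E w. \<exists>d2\<in>Dset E w. fst d1 * fst d2 + snd d1 * snd d2 = 0)"
    and nc: "card (Dset E w) \<noteq> 1" using nt wV turning_D by blast+
  have "Dset E w \<subseteq> {(- fst d, - snd d)}"
  proof
    fix e assume e: "e \<in> Dset E w"
    hence "fst (- fst d, - snd d) * fst e + snd (- fst d, - snd d) * snd e \<noteq> 0"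
      using np md by blast
    moreover have "e \<in> units" using e un by auto
    ultimately show "e \<in> {(- fst d, - snd d)}" using d nd e by (auto simp: units_def)
  qed
  hence "Dset E w = {(- fst d, - snd d)}" using md by auto
  thus False using nc by simp
qed

definition hpath :: "gpt set set \<Rightarrow> int \<Rightarrow> int \<Rightarrow> int \<Rightarrow> bool" where
  "hpath E y a b \<longleftrightarrow> (\<forall>x. a \<le> x \<and> x < b \<longrightarrow> {(x, y), (x + 1, y)} \<in> E)"

definition vpath :: "gpt set set \<Rightarrow> int \<Rightarrow> int \<Rightarrow> int \<Rightarrow> bool" where
  "vpath E x a b \<longleftrightarrow> (\<forall>y. a \<le> y \<and> y < b \<longrightarrow> {(x, y), (x, y + 1)} \<in> E)"

lemma sp_h: assumes "a < b" shows "straight_path E (a,y) (b,y) \<longleftrightarrow> hpath E y a b"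
proof -
  have g: "gdist (a,y) (b,y) = nat (b - a)" using assms by (simp add: gdist_def)
  have l: "\<And>t. line_pt (a,y) (b,y) t = (a + int t, y)" using assms by (simp add: line_pt_def)
  show ?thesis
  proof
    assume sp: "straight_path E (a,y) (b,y)"
    show "hpath E y a b" unfolding hpath_def
    proof (intro allI impI)
      fix x assume x: "a \<le> x \<and> x < b"
      have "nat (x - a) < gdist (a,y) (b,y)" using x g by simp
      hence "{line_pt (a,y) (b,y) (nat (x - a)), line_pt (a,y) (b,y) (Suc (nat (x - a)))} \<in> E"
        using sp unfolding straight_path_def by blast
      thus "{(x, y), (x + 1, y)} \<in> E" using x by (simp add: l add.commute)
    qed
  next
    assume h: "hpath E y a b"
    show "straight_path E (a,y) (b,y)" unfolding straight_path_def
    proof (intro conjI allI impI)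
      show "(a, y) \<noteq> (b, y)" using assms by simp
      show "fst (a, y) = fst (b, y) \<or> snd (a, y) = snd (b, y)" by simp
      fix t assume "t < gdist (a, y) (b, y)"
      hence "a \<le> a + int t \<and> a + int t < b" using g by simp
      hence "{(a + int t, y), (a + int t + 1, y)} \<in> E" using h unfolding hpath_def by blast
      thus "{line_pt (a, y) (b, y) t, line_pt (a, y) (b, y) (Suc t)} \<in> E" by (simp add: l algebra_simps)
    qed
  qed
qed

lemma sp_h': assumes "a < b" shows "straight_path E (b,y) (a,y) \<longleftrightarrow> hpath E y a b"
proof -
  have g: "gdist (b,y) (a,y) = nat (b - a)" using assms by (simp add: gdist_def)
  have l: "\<And>t. line_pt (b,y) (a,y) t = (b - int t, y)" using assms by (simp add: line_pt_def)
  show ?thesis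
  proof
    assume sp: "straight_path E (b,y) (a,y)"
    show "hpath E y a b" unfolding hpath_def
    proof (intro allI impI)
      fix x assume x: "a \<le> x \<and> x < b"
      have "nat (b - x - 1) < gdist (b,y) (a,y)" using x g by simp
      hence "{line_pt (b,y) (a,y) (nat (b - x - 1)), line_pt (b,y) (a,y) (Suc (nat (b - x - 1)))} \<in> E"
        using sp unfolding straight_path_def by blast
      moreover have "b - int (nat (b - x - 1)) = x + 1" "b - int (Suc (nat (b - x - 1))) = x" using x by auto
      ultimately show "{(x, y), (x + 1, y)} \<in> E" by (simp add: l insert_commute)
    qed
  next
    assume h: "hpath E y a b"
    show "straight_path E (b,y) (a,y)" unfolding straight_path_def
    proof (intro conjI allI impI)
      show "(b, y) \<noteq> (a, y)" using assms by simp
      show "fst (b, y) = fst (a, y) \<or> snd (b, y) = snd (a, y)" by simp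
      fix t assume "t < gdist (b, y) (a, y)"
      hence "a \<le> b - int t - 1 \<and> b - int t - 1 < b" using g by simp
      hence "{(b - int t - 1, y), (b - int t - 1 + 1, y)} \<in> E" using h unfolding hpath_def by blast
      thus "{line_pt (b, y) (a, y) t, line_pt (b, y) (a, y) (Suc t)} \<in> E"
        by (simp add: l insert_commute algebra_simps)
    qed
  qed
qed

lemma sp_v: assumes "a < b" shows "straight_path E (x,a) (x,b) \<longleftrightarrow> vpath E x a b"
proof -
  have g: "gdist (x,a) (x,b) = nat (b - a)" using assms by (simp add: gdist_def)
  have l: "\<And>t. line_pt (x,a) (x,b) t = (x, a + int t)" using assms by (simp add: line_pt_def)
  show ?thesis
  proof
    assume sp: "straight_path E (x,a) (x,b)"
    show "vpath E x a b" unfolding vpath_def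
    proof (intro allI impI)
      fix y assume y: "a \<le> y \<and> y < b"
      have "nat (y - a) < gdist (x,a) (x,b)" using y g by simp
      hence "{line_pt (x,a) (x,b) (nat (y - a)), line_pt (x,a) (x,b) (Suc (nat (y - a)))} \<in> E"
        using sp unfolding straight_path_def by blast
      thus "{(x, y), (x, y + 1)} \<in> E" using y by (simp add: l add.commute)
    qed
  next
    assume h: "vpath E x a b"
    show "straight_path E (x,a) (x,b)" unfolding straight_path_def
    proof (intro conjI allI impI)
      show "(x, a) \<noteq> (x, b)" using assms by simp
      show "fst (x, a) = fst (x, b) \<or> snd (x, a) = snd (x, b)" by simp
      fix t assume "t < gdist (x, a) (x, b)"
      hence "a \<le> a + int t \<and> a + int t < b" using g by simp
      hence "{(x, a + int t), (x, a + int t + 1)} \<in> E" using h unfolding vpath_def by blast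
      thus "{line_pt (x, a) (x, b) t, line_pt (x, a) (x, b) (Suc t)} \<in> E" by (simp add: l algebra_simps)
    qed
  qed
qed

lemma sp_v': assumes "a < b" shows "straight_path E (x,b) (x,a) \<longleftrightarrow> vpath E x a b"
proof -
  have g: "gdist (x,b) (x,a) = nat (b - a)" using assms by (simp add: gdist_def)
  have l: "\<And>t. line_pt (x,b) (x,a) t = (x, b - int t)" using assms by (simp add: line_pt_def)
  show ?thesis
  proof
    assume sp: "straight_path E (x,b) (x,a)"
    show "vpath E x a b" unfolding vpath_def
    proof (intro allI impI)
      fix y assume y: "a \<le> y \<and> y < b"
      have "nat (b - y - 1) < gdist (x,b) (x,a)" using y g by simp
      hence "{line_pt (x,b) (x,a) (nat (b - y - 1)), line_pt (x,b) (x,a) (Suc (nat (b - y - 1)))} \<in> E"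
        using sp unfolding straight_path_def by blast
      moreover have "b - int (nat (b - y - 1)) = y + 1" "b - int (Suc (nat (b - y - 1))) = y" using y by auto
      ultimately show "{(x, y), (x, y + 1)} \<in> E" by (simp add: l insert_commute)
    qed
  next
    assume h: "vpath E x a b"
    show "straight_path E (x,b) (x,a)" unfolding straight_path_def
    proof (intro conjI allI impI)
      show "(x, b) \<noteq> (x, a)" using assms by simp
      show "fst (x, b) = fst (x, a) \<or> snd (x, b) = snd (x, a)" by simp
      fix t assume "t < gdist (x, b) (x, a)"
      hence "a \<le> b - int t - 1 \<and> b - int t - 1 < b" using g by simp
      hence "{(x, b - int t - 1), (x, b - int t - 1 + 1)} \<in> E" using h unfolding vpath_def by blast
      thus "{line_pt (x, b) (x, a) t, line_pt (x, b) (x, a) (Suc t)} \<in> E"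
        by (simp add: l insert_commute algebra_simps)
    qed
  qed
qed

lemma int_h: assumes "a < b" shows "interior_pts (a,y) (b,y) = {(x,y) | x. a < x \<and> x < b}"
proof -
  have g: "gdist (a,y) (b,y) = nat (b - a)" using assms by (simp add: gdist_def)
  have l: "\<And>t. line_pt (a,y) (b,y) t = (a + int t, y)" using assms by (simp add: line_pt_def)
  show ?thesis unfolding interior_pts_def g l
    apply auto
    apply (rule_tac x="nat (x - a)" in exI) apply auto done
qed

lemma int_h': assumes "a < b" shows "interior_pts (b,y) (a,y) = {(x,y) | x. a < x \<and> x < b}"
proof -
  have g: "gdist (b,y) (a,y) = nat (b - a)" using assms by (simp add: gdist_def)
  have l: "\<And>t. line_pt (b,y) (a,y) t = (b - int t, y)" using assms by (simp add: line_pt_def)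
  show ?thesis unfolding interior_pts_def g l
    apply auto
    apply (rule_tac x="nat (b - x)" in exI) apply auto done
qed

lemma int_v: assumes "a < b" shows "interior_pts (x,a) (x,b) = {(x,y) | y. a < y \<and> y < b}"
proof -
  have g: "gdist (x,a) (x,b) = nat (b - a)" using assms by (simp add: gdist_def)
  have l: "\<And>t. line_pt (x,a) (x,b) t = (x, a + int t)" using assms by (simp add: line_pt_def)
  show ?thesis unfolding interior_pts_def g l
    apply auto
    apply (rule_tac x="nat (y - a)" in exI) apply auto done
qed

lemma int_v': assumes "a < b" shows "interior_pts (x,b) (x,a) = {(x,y) | y. a < y \<and> y < b}"
proof -
  have g: "gdist (x,b) (x,a) = nat (b - a)" using assms by (simp add: gdist_def)
  have l: "\<And>t. line_pt (x,b) (x,a) t = (x, b - int t)" using assms by (simp add: line_pt_def)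
  show ?thesis unfolding interior_pts_def g l
    apply auto
    apply (rule_tac x="nat (b - y)" in exI) apply auto done
qed

lemma sp_diag: "straight_path E (a,y) (b,y') \<Longrightarrow> a = b \<or> y = y'"
  by (simp add: straight_path_def)

lemma seg_sym: "is_segment V E u v \<longleftrightarrow> is_segment V E v u"
proof -
  obtain a y b y' where u: "u = (a,y)" and v: "v = (b,y')" by fastforce
  show ?thesis
  proof (cases "y = y'")
    case True
    show ?thesis
    proof (cases a b rule: linorder_cases)
      case less thus ?thesis using True sp_h[OF less] sp_h'[OF less] int_h[OF less] int_h'[OF less]
        unfolding u v is_segment_def by auto
    next
      case greater thus ?thesis using True sp_h[OF greater] sp_h'[OF greater] int_h[OF greater] int_h'[OF greater]
        unfolding u v is_segment_def by auto
    qed (auto simp: u v is_segment_def True straight_path_def)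
  next
    case False
    show ?thesis
    proof (cases "a = b")
      case True
      show ?thesis
      proof (cases y y' rule: linorder_cases)
        case less thus ?thesis using True sp_v[OF less] sp_v'[OF less] int_v[OF less] int_v'[OF less]
          unfolding u v is_segment_def by auto
      next
        case greater thus ?thesis using True sp_v[OF greater] sp_v'[OF greater] int_v[OF greater] int_v'[OF greater]
          unfolding u v is_segment_def by auto
      qed (use False in auto)
    next
      case False
      thus ?thesis using \<open>y \<noteq> y'\<close> by (auto simp: u v is_segment_def straight_path_def)
    qed
  qed
qed



locale shp =
  fixes V :: "gpt set" and E :: "gpt set set"
  assumes shape: "is_shape V E"
begin

abbreviation "C \<equiv> comp_col V E"
abbreviation "R \<equiv> comp_row V E"
abbreviation "cx \<equiv> cnt C"
abbreviation "cy \<equiv> cnt R"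
abbreviation "surv \<equiv> survivor V E"
abbreviation "cV \<equiv> fst (compress_all V E)"
abbreviation "cE \<equiv> snd (compress_all V E)"

lemma finV: "finite V" using shape by (simp add: is_shape_def)

lemma finC: "finite {c. C c}"
proof -
  have "{c. C c} \<subseteq> fst ` V" by (auto simp: comp_col_def) (metis fst_conv image_eqI)
  thus ?thesis using finV finite_subset by blast
qed

lemma finR: "finite {c. R c}"
proof -
  have "{c. R c} \<subseteq> snd ` V" by (auto simp: comp_row_def) (metis snd_conv image_eqI)
  thus ?thesis using finV finite_subset by blast
qed

lemma cmap_eq: "cmap V E p = (cx (fst p), cy (snd p))"
  by (simp add: cmap_def cnt_def)

lemma cmap_eq2: "cmap V E (a,y) = (cx a, cy y)"
  by (simp add: cmap_eq)

lemma iV_eq: "cV = cmap V E ` {p. surv p}" by (simp add: compress_all_def)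

lemma iE_eq: "cE = {{cmap V E p, cmap V E q} | p q. surv p \<and> surv q \<and>
          straight_path E p q \<and> (\<forall>w\<in>interior_pts p q. \<not> surv w)}"
  by (simp add: compress_all_def)

lemma unit_dist_sym: "unit_dist u v \<longleftrightarrow> unit_dist v u"
  by (simp add: unit_dist_def abs_minus_commute)

lemma edgeE: "{u, v} \<in> E \<Longrightarrow> u \<in> V \<and> v \<in> V \<and> unit_dist u v"
proof -
  assume e: "{u, v} \<in> E"
  have "\<forall>e\<in>E. \<exists>u v. e = {u, v} \<and> u \<in> V \<and> v \<in> V \<and> unit_dist u v"
    using shape by (simp add: is_shape_def)
  then obtain u' v' where d: "{u,v} = {u',v'}" and h: "u' \<in> V" "v' \<in> V" "unit_dist u' v'"
    using e by blast
  have "(u = u' \<and> v = v') \<or> (u = v' \<and> v = u')" using d by (simp add: doubleton_eq_iff)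
  thus ?thesis
  proof
    assume "u = u' \<and> v = v'" thus ?thesis using h by simp
  next
    assume "u = v' \<and> v = u'" thus ?thesis using h unit_dist_sym[of u' v'] by simp
  qed
qed

lemma Dset_units: "Dset E w \<subseteq> units"
proof
  fix d assume "d \<in> Dset E w"
  hence "unit_dist w (fst w + fst d, snd w + snd d)" using edgeE unfolding Dset_def by blast
  hence "(fst w + fst d, snd w + snd d) \<in> {(fst w + 1, snd w), (fst w - 1, snd w), (fst w, snd w + 1), (fst w, snd w - 1)}"
    unfolding unit_dist_iff by simp
  thus "d \<in> units" unfolding units_def by (cases d) (auto simp: prod_eq_iff)
qed

lemma C_nturn: "C x \<Longrightarrow> \<not> turning V E (x, y)" by (simp add: comp_col_def)
lemma R_nturn: "R y \<Longrightarrow> \<not> turning V E (x, y)" by (simp add: comp_row_def)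

lemma turn_surv: "turning V E u \<Longrightarrow> surv u"
proof -
  assume t: "turning V E u"
  obtain x y where u: "u = (x,y)" by fastforce
  have "u \<in> V" using t by (simp add: turning_def)
  moreover have "\<not> C x" using t C_nturn u by blast
  moreover have "\<not> R y" using t R_nturn u by blast
  ultimately show ?thesis by (simp add: survivor_def u)
qed

lemma survD: "surv u \<Longrightarrow> u \<in> V \<and> \<not> C (fst u) \<and> \<not> R (snd u)"
  by (simp add: survivor_def)

lemma cx_eq: "surv (a,y) \<Longrightarrow> surv (a',y') \<Longrightarrow> cx a = cx a' \<longleftrightarrow> a = a'"
  using cnt_eq_iff[OF finC] survD by fastforce
lemma cy_eq: "surv (a,y) \<Longrightarrow> surv (a',y') \<Longrightarrow> cy y = cy y' \<longleftrightarrow> y = y'"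
  using cnt_eq_iff[OF finR] survD by fastforce

lemma cmap_inj: "inj_on (cmap V E) {p. surv p}"
proof (rule inj_onI)
  fix p q assume a: "p \<in> {p. surv p}" "q \<in> {p. surv p}" "cmap V E p = cmap V E q"
  obtain x y where p: "p = (x,y)" by fastforce
  obtain x' y' where q: "q = (x',y')" by fastforce
  have "cx x = cx x'" "cy y = cy y'" using a(3) unfolding p q cmap_eq2 by simp_all
  thus "p = q" using cx_eq[of x y x' y'] cy_eq[of x y x' y'] a(1,2) unfolding p q by simp
qed

lemma iE_intro_h:
  assumes "surv (a,y)" "surv (b,y)" "a < b" "hpath E y a b" "\<forall>x. a < x \<and> x < b \<longrightarrow> C x"
  shows "{cmap V E (a,y), cmap V E (b,y)} \<in> cE"
proof -
  have "straight_path E (a,y) (b,y)" using assms sp_h by blast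
  moreover have "\<forall>w\<in>interior_pts (a,y) (b,y). \<not> surv w"
  proof
    fix w assume "w \<in> interior_pts (a,y) (b,y)"
    then obtain z where w: "w = (z,y)" "a < z \<and> z < b" using int_h[OF assms(3)] by blast
    hence "C z" using assms(5) by blast
    thus "\<not> surv w" unfolding w survivor_def by simp
  qed
  ultimately have "\<exists>p q. {cmap V E (a,y), cmap V E (b,y)} = {cmap V E p, cmap V E q} \<and> surv p \<and> surv q \<and>
          straight_path E p q \<and> (\<forall>w\<in>interior_pts p q. \<not> surv w)"
    using assms(1,2) by (intro exI[of _ "(a,y)"] exI[of _ "(b,y)"]) simp
  thus ?thesis by (simp only: iE_eq mem_Collect_eq)
qed

lemma iE_intro_v:
  assumes "surv (x,a)" "surv (x,b)" "a < b" "vpath E x a b" "\<forall>y. a < y \<and> y < b \<longrightarrow> R y"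
  shows "{cmap V E (x,a), cmap V E (x,b)} \<in> cE"
proof -
  have "straight_path E (x,a) (x,b)" using assms sp_v by blast
  moreover have "\<forall>w\<in>interior_pts (x,a) (x,b). \<not> surv w"
  proof
    fix w assume "w \<in> interior_pts (x,a) (x,b)"
    then obtain z where w: "w = (x,z)" "a < z \<and> z < b" using int_v[OF assms(3)] by blast
    hence "R z" using assms(5) by blast
    thus "\<not> surv w" unfolding w survivor_def by simp
  qed
  ultimately have "\<exists>p q. {cmap V E (x,a), cmap V E (x,b)} = {cmap V E p, cmap V E q} \<and> surv p \<and> surv q \<and>
          straight_path E p q \<and> (\<forall>w\<in>interior_pts p q. \<not> surv w)"
    using assms(1,2) by (intro exI[of _ "(x,a)"] exI[of _ "(x,b)"]) simp
  thus ?thesis by (simp only: iE_eq mem_Collect_eq)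
qed

lemma Hstep:
  assumes "surv (a,y)" "surv (b,y)" "a < b" "hpath E y a b" "\<forall>x. a < x \<and> x < b \<longrightarrow> \<not> surv (x,y)"
  shows "cx b = cx a + 1"
proof -
  have "\<forall>x. a < x \<and> x < b \<longrightarrow> C x"
  proof (intro allI impI)
    fix x assume x: "a < x \<and> x < b"
    hence "{(x,y),(x+1,y)} \<in> E" using assms(4) unfolding hpath_def by auto
    hence "(x,y) \<in> V" using edgeE by blast
    thus "C x" using assms(1,5) x survD[OF assms(1)] by (auto simp: survivor_def)
  qed
  thus ?thesis using cnt_next2[OF finC] assms(3) survD[OF assms(1)] by auto
qed

lemma Vstep:
  assumes "surv (x,a)" "surv (x,b)" "a < b" "vpath E x a b" "\<forall>y. a < y \<and> y < b \<longrightarrow> \<not> surv (x,y)"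
  shows "cy b = cy a + 1"
proof -
  have "\<forall>y. a < y \<and> y < b \<longrightarrow> R y"
  proof (intro allI impI)
    fix y assume y: "a < y \<and> y < b"
    hence "{(x,y),(x,y+1)} \<in> E" using assms(4) unfolding vpath_def by auto
    hence "(x,y) \<in> V" using edgeE by blast
    thus "R y" using assms(1,5) y survD[OF assms(1)] by (auto simp: survivor_def)
  qed
  thus ?thesis using cnt_next2[OF finR] assms(3) survD[OF assms(1)] by auto
qed

lemma iE_cases:
  assumes "e \<in> cE"
  shows "\<exists>p q. e = {cmap V E p, cmap V E q} \<and> surv p \<and> surv q \<and>
   ((snd p = snd q \<and> fst p < fst q \<and> hpath E (snd p) (fst p) (fst q) \<and> cx (fst q) = cx (fst p) + 1) \<or>
    (fst p = fst q \<and> snd p < snd q \<and> vpath E (fst p) (snd p) (snd q) \<and> cy (snd q) = cy (snd p) + 1))"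
proof -
  obtain p q where e: "e = {cmap V E p, cmap V E q}" and sp: "surv p" and sq: "surv q"
    and st: "straight_path E p q" and it: "\<forall>w\<in>interior_pts p q. \<not> surv w"
    using assms unfolding iE_eq by blast
  obtain a y b y' where p: "p = (a,y)" and q: "q = (b,y')" by fastforce
  have pq: "p \<noteq> q" using st by (simp add: straight_path_def)
  show ?thesis
  proof (cases "y = y'")
    case True
    show ?thesis
    proof (cases a b rule: linorder_cases)
      case less
      have h: "hpath E y a b" using st sp_h[OF less] unfolding p q True by simp
      have "cx b = cx a + 1" using Hstep[OF _ _ less h] sp sq it int_h[OF less] unfolding p q True by auto
      thus ?thesis using e sp sq h less unfolding p q True by auto
    next
      case greater
      have h: "hpath E y b a" using st sp_h'[OF greater] unfolding p q True by simp
      have "cx a = cx b + 1" using Hstep[OF _ _ greater h] sp sq it int_h'[OF greater] unfolding p q True by auto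
      moreover have "e = {cmap V E q, cmap V E p}" using e by (simp add: insert_commute)
      ultimately show ?thesis using sp sq h greater unfolding p q True
        by (intro exI[of _ "(b,y')"] exI[of _ "(a,y')"]) simp
    qed (use pq p q True in auto)
  next
    case False
    hence ab: "a = b" using st sp_diag unfolding p q by blast
    show ?thesis
    proof (cases y y' rule: linorder_cases)
      case less
      have h: "vpath E a y y'" using st sp_v[OF less] unfolding p q ab by simp
      have "cy y' = cy y + 1" using Vstep[OF _ _ less h] sp sq it int_v[OF less] unfolding p q ab by auto
      thus ?thesis using e sp sq h less unfolding p q ab by auto
    next
      case greater
      have h: "vpath E a y' y" using st sp_v'[OF greater] unfolding p q ab by simp
      have "cy y = cy y' + 1" using Vstep[OF _ _ greater h] sp sq it int_v'[OF greater] unfolding p q ab by auto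
      moreover have "e = {cmap V E q, cmap V E p}" using e by (simp add: insert_commute)
      ultimately show ?thesis using sp sq h greater unfolding p q ab
        by (intro exI[of _ "(b,y')"] exI[of _ "(b,y)"]) simp
    qed (use False in auto)
  qed
qed

lemma iE_h_elim:
  assumes "{(X,Y),(X+1,Y)} \<in> cE"
  shows "\<exists>a b y. a < b \<and> surv (a,y) \<and> surv (b,y) \<and> cx a = X \<and> cx b = X + 1 \<and> cy y = Y \<and> hpath E y a b"
proof -
  obtain p q where e: "{(X,Y),(X+1,Y)} = {cmap V E p, cmap V E q}" and s: "surv p" "surv q"
    and c: "(snd p = snd q \<and> fst p < fst q \<and> hpath E (snd p) (fst p) (fst q) \<and> cx (fst q) = cx (fst p) + 1) \<or>
    (fst p = fst q \<and> snd p < snd q \<and> vpath E (fst p) (snd p) (snd q) \<and> cy (snd q) = cy (snd p) + 1)"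
    using iE_cases[OF assms] by blast
  show ?thesis
  proof (cases "snd p = snd q \<and> fst p < fst q \<and> hpath E (snd p) (fst p) (fst q) \<and> cx (fst q) = cx (fst p) + 1")
    case True
    hence "X = cx (fst p) \<and> Y = cy (snd p)" using e by (auto simp: cmap_eq doubleton_eq_iff)
    thus ?thesis using True s
      by (intro exI[of _ "fst p"] exI[of _ "fst q"] exI[of _ "snd p"]) (cases p, cases q, auto)
  next
    case False
    hence "fst p = fst q" using c by blast
    hence f: "fst (cmap V E p) = fst (cmap V E q)" by (simp add: cmap_eq)
    have "((X,Y) = cmap V E p \<and> (X+1,Y) = cmap V E q) \<or> ((X,Y) = cmap V E q \<and> (X+1,Y) = cmap V E p)"
      using e by (simp add: doubleton_eq_iff)
    hence False using f by (metis fst_conv add_cancel_left_right one_neq_zero)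
    thus ?thesis ..
  qed
qed

lemma iE_v_elim:
  assumes "{(X,Y),(X,Y+1)} \<in> cE"
  shows "\<exists>a b x. a < b \<and> surv (x,a) \<and> surv (x,b) \<and> cy a = Y \<and> cy b = Y + 1 \<and> cx x = X \<and> vpath E x a b"
proof -
  obtain p q where e: "{(X,Y),(X,Y+1)} = {cmap V E p, cmap V E q}" and s: "surv p" "surv q"
    and c: "(snd p = snd q \<and> fst p < fst q \<and> hpath E (snd p) (fst p) (fst q) \<and> cx (fst q) = cx (fst p) + 1) \<or>
    (fst p = fst q \<and> snd p < snd q \<and> vpath E (fst p) (snd p) (snd q) \<and> cy (snd q) = cy (snd p) + 1)"
    using iE_cases[OF assms] by blast
  show ?thesis
  proof (cases "fst p = fst q \<and> snd p < snd q \<and> vpath E (fst p) (snd p) (snd q) \<and> cy (snd q) = cy (snd p) + 1")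
    case True
    hence "Y = cy (snd p) \<and> X = cx (fst p)" using e by (auto simp: cmap_eq doubleton_eq_iff)
    thus ?thesis using True s
      by (intro exI[of _ "snd p"] exI[of _ "snd q"] exI[of _ "fst p"]) (cases p, cases q, auto)
  next
    case False
    hence "snd p = snd q" using c by blast
    hence f: "snd (cmap V E p) = snd (cmap V E q)" by (simp add: cmap_eq)
    have "((X,Y) = cmap V E p \<and> (X,Y+1) = cmap V E q) \<or> ((X,Y) = cmap V E q \<and> (X,Y+1) = cmap V E p)"
      using e by (simp add: doubleton_eq_iff)
    hence False using f by (metis snd_conv add_cancel_left_right one_neq_zero)
    thus ?thesis ..
  qed
qed

lemma iE_unit: "{A, B} \<in> cE \<Longrightarrow> unit_dist A B"
proof -
  assume "{A, B} \<in> cE"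
  then obtain p q where e: "{A,B} = {cmap V E p, cmap V E q}"
    and c: "(snd p = snd q \<and> cx (fst q) = cx (fst p) + 1) \<or>
    (fst p = fst q \<and> cy (snd q) = cy (snd p) + 1)"
    using iE_cases by blast
  have u: "unit_dist (cmap V E p) (cmap V E q)" using c by (auto simp: cmap_eq unit_dist_def)
  have "(A = cmap V E p \<and> B = cmap V E q) \<or> (A = cmap V E q \<and> B = cmap V E p)"
    using e by (simp add: doubleton_eq_iff)
  thus ?thesis using u unit_dist_sym by blast
qed


lemma walk_right:
  assumes e: "{(a,y),(a+1,y)} \<in> E" and ab: "a < b" and mid: "\<forall>c. a < c \<and> c < b \<longrightarrow> C c"
  shows "hpath E y a b"
proof -
  have "\<forall>n::nat. a + int n < b \<longrightarrow> {(a + int n, y), (a + int n + 1, y)} \<in> E"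
  proof
    fix n show "a + int n < b \<longrightarrow> {(a + int n, y), (a + int n + 1, y)} \<in> E"
    proof (induction n)
      case 0 show ?case using e by simp
    next
      case (Suc n)
      show ?case
      proof
        assume lt: "a + int (Suc n) < b"
        have e1: "{(a + int n, y), (a + int n + 1, y)} \<in> E" using Suc lt by simp
        define w where "w = (a + int n + 1, y)"
        have wV: "w \<in> V" using edgeE[OF e1] w_def by simp
        have "C (a + int n + 1)" using mid lt by simp
        hence nt: "\<not> turning V E w" unfolding w_def by (rule C_nturn)
        have "(- fst (1::int,0::int), - snd (1::int, 0::int)) \<in> Dset E w"
          using e1 unfolding Dset_def w_def by (simp add: insert_commute)
        hence "(1,0) \<in> Dset E w" using cont[OF nt wV Dset_units, of "(1,0)"] by (simp add: units_def)
        thus "{(a + int (Suc n), y), (a + int (Suc n) + 1, y)} \<in> E"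
          unfolding Dset_def w_def by (simp add: algebra_simps)
      qed
    qed
  qed
  thus ?thesis unfolding hpath_def
  proof (intro allI impI)
    fix x assume h: "\<forall>n::nat. a + int n < b \<longrightarrow> {(a + int n, y), (a + int n + 1, y)} \<in> E"
      and x: "a \<le> x \<and> x < b"
    have "a + int (nat (x - a)) = x" using x by simp
    thus "{(x, y), (x + 1, y)} \<in> E" using h[rule_format, of "nat (x - a)"] x by simp
  qed
qed

lemma walk_left:
  assumes e: "{(a,y),(a-1,y)} \<in> E" and ab: "b < a" and mid: "\<forall>c. b < c \<and> c < a \<longrightarrow> C c"
  shows "hpath E y b a"
proof -
  have "\<forall>n::nat. b < a - int n \<longrightarrow> {(a - int n - 1, y), (a - int n, y)} \<in> E"
  proof
    fix n show "b < a - int n \<longrightarrow> {(a - int n - 1, y), (a - int n, y)} \<in> E"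
    proof (induction n)
      case 0 show ?case using e by (simp add: insert_commute)
    next
      case (Suc n)
      show ?case
      proof
        assume lt: "b < a - int (Suc n)"
        have e1: "{(a - int n - 1, y), (a - int n, y)} \<in> E" using Suc lt by simp
        define w where "w = (a - int n - 1, y)"
        have wV: "w \<in> V" using edgeE[OF e1] w_def by simp
        have "C (a - int n - 1)" using mid lt by simp
        hence nt: "\<not> turning V E w" unfolding w_def by (rule C_nturn)
        have "(- fst (-1::int,0::int), - snd (-1::int, 0::int)) \<in> Dset E w"
          using e1 unfolding Dset_def w_def by (simp add: insert_commute)
        hence "(-1,0) \<in> Dset E w" using cont[OF nt wV Dset_units, of "(-1,0)"] by (simp add: units_def)
        thus "{(a - int (Suc n) - 1, y), (a - int (Suc n), y)} \<in> E"
          unfolding Dset_def w_def by (simp add: algebra_simps insert_commute)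
      qed
    qed
  qed
  thus ?thesis unfolding hpath_def
  proof (intro allI impI)
    fix x assume h: "\<forall>n::nat. b < a - int n \<longrightarrow> {(a - int n - 1, y), (a - int n, y)} \<in> E"
      and x: "b \<le> x \<and> x < a"
    have "a - int (nat (a - 1 - x)) - 1 = x" using x by simp
    thus "{(x, y), (x + 1, y)} \<in> E" using h[rule_format, of "nat (a - 1 - x)"] x by (simp add: add.commute)
  qed
qed

lemma walk_up:
  assumes e: "{(x,a),(x,a+1)} \<in> E" and ab: "a < b" and mid: "\<forall>c. a < c \<and> c < b \<longrightarrow> R c"
  shows "vpath E x a b"
proof -
  have "\<forall>n::nat. a + int n < b \<longrightarrow> {(x, a + int n), (x, a + int n + 1)} \<in> E"
  proof
    fix n show "a + int n < b \<longrightarrow> {(x, a + int n), (x, a + int n + 1)} \<in> E"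
    proof (induction n)
      case 0 show ?case using e by simp
    next
      case (Suc n)
      show ?case
      proof
        assume lt: "a + int (Suc n) < b"
        have e1: "{(x, a + int n), (x, a + int n + 1)} \<in> E" using Suc lt by simp
        define w where "w = (x, a + int n + 1)"
        have wV: "w \<in> V" using edgeE[OF e1] w_def by simp
        have "R (a + int n + 1)" using mid lt by simp
        hence nt: "\<not> turning V E w" unfolding w_def by (rule R_nturn)
        have "(- fst (0::int,1::int), - snd (0::int, 1::int)) \<in> Dset E w"
          using e1 unfolding Dset_def w_def by (simp add: insert_commute)
        hence "(0,1) \<in> Dset E w" using cont[OF nt wV Dset_units, of "(0,1)"] by (simp add: units_def)
        thus "{(x, a + int (Suc n)), (x, a + int (Suc n) + 1)} \<in> E"
          unfolding Dset_def w_def by (simp add: algebra_simps)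
      qed
    qed
  qed
  thus ?thesis unfolding vpath_def
  proof (intro allI impI)
    fix y assume h: "\<forall>n::nat. a + int n < b \<longrightarrow> {(x, a + int n), (x, a + int n + 1)} \<in> E"
      and y: "a \<le> y \<and> y < b"
    have "a + int (nat (y - a)) = y" using y by simp
    thus "{(x, y), (x, y + 1)} \<in> E" using h[rule_format, of "nat (y - a)"] y by simp
  qed
qed

lemma walk_down:
  assumes e: "{(x,a),(x,a-1)} \<in> E" and ab: "b < a" and mid: "\<forall>c. b < c \<and> c < a \<longrightarrow> R c"
  shows "vpath E x b a"
proof -
  have "\<forall>n::nat. b < a - int n \<longrightarrow> {(x, a - int n - 1), (x, a - int n)} \<in> E"
  proof
    fix n show "b < a - int n \<longrightarrow> {(x, a - int n - 1), (x, a - int n)} \<in> E"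
    proof (induction n)
      case 0 show ?case using e by (simp add: insert_commute)
    next
      case (Suc n)
      show ?case
      proof
        assume lt: "b < a - int (Suc n)"
        have e1: "{(x, a - int n - 1), (x, a - int n)} \<in> E" using Suc lt by simp
        define w where "w = (x, a - int n - 1)"
        have wV: "w \<in> V" using edgeE[OF e1] w_def by simp
        have "R (a - int n - 1)" using mid lt by simp
        hence nt: "\<not> turning V E w" unfolding w_def by (rule R_nturn)
        have "(- fst (0::int,-1::int), - snd (0::int, -1::int)) \<in> Dset E w"
          using e1 unfolding Dset_def w_def by (simp add: insert_commute)
        hence "(0,-1) \<in> Dset E w" using cont[OF nt wV Dset_units, of "(0,-1)"] by (simp add: units_def)
        thus "{(x, a - int (Suc n) - 1), (x, a - int (Suc n))} \<in> E"
          unfolding Dset_def w_def by (simp add: algebra_simps insert_commute)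
      qed
    qed
  qed
  thus ?thesis unfolding vpath_def
  proof (intro allI impI)
    fix y assume h: "\<forall>n::nat. b < a - int n \<longrightarrow> {(x, a - int n - 1), (x, a - int n)} \<in> E"
      and y: "b \<le> y \<and> y < a"
    have "a - int (nat (a - 1 - y)) - 1 = y" using y by simp
    thus "{(x, y), (x, y + 1)} \<in> E" using h[rule_format, of "nat (a - 1 - y)"] y by (simp add: add.commute)
  qed
qed


lemma flag_R:
  assumes s: "surv (a,y)"
  shows "{(a,y),(a+1,y)} \<in> E \<longleftrightarrow> {(cx a, cy y), (cx a + 1, cy y)} \<in> cE"
proof
  assume e: "{(a,y),(a+1,y)} \<in> E"
  obtain b where b: "b > a" "\<not> C b" "\<forall>c. a < c \<and> c < b \<longrightarrow> C c"
    using exists_next[OF finC] by blast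
  have h: "hpath E y a b" by (rule walk_right[OF e b(1) b(3)])
  have "{(b-1,y),(b-1+1,y)} \<in> E" using h b(1) unfolding hpath_def by (auto dest: spec[of _ "b-1"])
  hence "(b,y) \<in> V" using edgeE by fastforce
  hence sb: "surv (b,y)" using survD[OF s] b(2) by (simp add: survivor_def)
  have "{cmap V E (a,y), cmap V E (b,y)} \<in> cE" by (rule iE_intro_h[OF s sb b(1) h b(3)])
  moreover have "cx b = cx a + 1" using cnt_next2[OF finC b(1) _ b(3)] survD[OF s] by simp
  ultimately show "{(cx a, cy y), (cx a + 1, cy y)} \<in> cE" by (simp add: cmap_eq2)
next
  assume "{(cx a, cy y), (cx a + 1, cy y)} \<in> cE"
  then obtain a' b' y' where h: "a' < b'" "surv (a',y')" "surv (b',y')" "cx a' = cx a" "cy y' = cy y"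
    "hpath E y' a' b'" using iE_h_elim by blast
  have "a' = a" "y' = y" using cx_eq[of a' y' a y] cy_eq[of a' y' a y] h s by auto
  thus "{(a,y),(a+1,y)} \<in> E" using h unfolding hpath_def by auto
qed

lemma flag_L:
  assumes s: "surv (a,y)"
  shows "{(a,y),(a-1,y)} \<in> E \<longleftrightarrow> {(cx a, cy y), (cx a - 1, cy y)} \<in> cE"
proof
  assume e: "{(a,y),(a-1,y)} \<in> E"
  obtain b where b: "b < a" "\<not> C b" "\<forall>c. b < c \<and> c < a \<longrightarrow> C c"
    using exists_prev[OF finC] by blast
  have h: "hpath E y b a" by (rule walk_left[OF e b(1) b(3)])
  have "{(b,y),(b+1,y)} \<in> E" using h b(1) unfolding hpath_def by simp
  hence "(b,y) \<in> V" using edgeE by fastforce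
  hence sb: "surv (b,y)" using survD[OF s] b(2) by (simp add: survivor_def)
  have "{cmap V E (b,y), cmap V E (a,y)} \<in> cE" by (rule iE_intro_h[OF sb s b(1) h b(3)])
  moreover have "cx a = cx b + 1" using cnt_next2[OF finC b(1) b(2) b(3)] by simp
  ultimately show "{(cx a, cy y), (cx a - 1, cy y)} \<in> cE" by (simp add: cmap_eq2 insert_commute)
next
  assume "{(cx a, cy y), (cx a - 1, cy y)} \<in> cE"
  hence "{(cx a - 1, cy y), (cx a - 1 + 1, cy y)} \<in> cE" by (simp add: insert_commute)
  then obtain a' b' y' where h: "a' < b'" "surv (b',y')" "cx b' = cx a" "cy y' = cy y"
    "hpath E y' a' b'" using iE_h_elim by fastforce
  have "b' = a" "y' = y" using cx_eq[of b' y' a y] cy_eq[of b' y' a y] h s by auto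
  hence "{(a-1,y),(a-1+1,y)} \<in> E" using h unfolding hpath_def by (auto dest: spec[of _ "a-1"])
  thus "{(a,y),(a-1,y)} \<in> E" by (simp add: insert_commute)
qed

lemma flag_U:
  assumes s: "surv (x,a)"
  shows "{(x,a),(x,a+1)} \<in> E \<longleftrightarrow> {(cx x, cy a), (cx x, cy a + 1)} \<in> cE"
proof
  assume e: "{(x,a),(x,a+1)} \<in> E"
  obtain b where b: "b > a" "\<not> R b" "\<forall>c. a < c \<and> c < b \<longrightarrow> R c"
    using exists_next[OF finR] by blast
  have h: "vpath E x a b" by (rule walk_up[OF e b(1) b(3)])
  have "{(x,b-1),(x,b-1+1)} \<in> E" using h b(1) unfolding vpath_def by (auto dest: spec[of _ "b-1"])
  hence "(x,b) \<in> V" using edgeE by fastforce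
  hence sb: "surv (x,b)" using survD[OF s] b(2) by (simp add: survivor_def)
  have "{cmap V E (x,a), cmap V E (x,b)} \<in> cE" by (rule iE_intro_v[OF s sb b(1) h b(3)])
  moreover have "cy b = cy a + 1" using cnt_next2[OF finR b(1) _ b(3)] survD[OF s] by simp
  ultimately show "{(cx x, cy a), (cx x, cy a + 1)} \<in> cE" by (simp add: cmap_eq2)
next
  assume "{(cx x, cy a), (cx x, cy a + 1)} \<in> cE"
  then obtain a' b' x' where h: "a' < b'" "surv (x',a')" "surv (x',b')" "cy a' = cy a" "cx x' = cx x"
    "vpath E x' a' b'" using iE_v_elim by blast
  have "a' = a" "x' = x" using cy_eq[of x' a' x a] cx_eq[of x' a' x a] h s by auto
  thus "{(x,a),(x,a+1)} \<in> E" using h unfolding vpath_def by auto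
qed

lemma flag_D:
  assumes s: "surv (x,a)"
  shows "{(x,a),(x,a-1)} \<in> E \<longleftrightarrow> {(cx x, cy a), (cx x, cy a - 1)} \<in> cE"
proof
  assume e: "{(x,a),(x,a-1)} \<in> E"
  obtain b where b: "b < a" "\<not> R b" "\<forall>c. b < c \<and> c < a \<longrightarrow> R c"
    using exists_prev[OF finR] by blast
  have h: "vpath E x b a" by (rule walk_down[OF e b(1) b(3)])
  have "{(x,b),(x,b+1)} \<in> E" using h b(1) unfolding vpath_def by simp
  hence "(x,b) \<in> V" using edgeE by fastforce
  hence sb: "surv (x,b)" using survD[OF s] b(2) by (simp add: survivor_def)
  have "{cmap V E (x,b), cmap V E (x,a)} \<in> cE" by (rule iE_intro_v[OF sb s b(1) h b(3)])
  moreover have "cy a = cy b + 1" using cnt_next2[OF finR b(1) b(2) b(3)] by simp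
  ultimately show "{(cx x, cy a), (cx x, cy a - 1)} \<in> cE" by (simp add: cmap_eq2 insert_commute)
next
  assume "{(cx x, cy a), (cx x, cy a - 1)} \<in> cE"
  hence "{(cx x, cy a - 1), (cx x, cy a - 1 + 1)} \<in> cE" by (simp add: insert_commute)
  then obtain a' b' x' where h: "a' < b'" "surv (x',b')" "cy b' = cy a" "cx x' = cx x"
    "vpath E x' a' b'" using iE_v_elim by fastforce
  have "b' = a" "x' = x" using cy_eq[of x' b' x a] cx_eq[of x' b' x a] h s by auto
  hence "{(x,a-1),(x,a-1+1)} \<in> E" using h unfolding vpath_def by (auto dest: spec[of _ "a-1"])
  thus "{(x,a),(x,a-1)} \<in> E" by (simp add: insert_commute)
qed

lemma Dset_eq:
  assumes s: "surv p"
  shows "Dset cE (cmap V E p) = Dset E p"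
proof -
  obtain a y where p: "p = (a,y)" by fastforce
  have sa: "surv (a,y)" using s p by simp
  have "d \<in> Dset cE (cmap V E p) \<longleftrightarrow> d \<in> Dset E p" for d
  proof (cases "d \<in> units")
    case True
    then consider "d = (1,0)" | "d = (-1,0)" | "d = (0,1)" | "d = (0,-1)" unfolding units_def by blast
    thus ?thesis
    proof cases
      case 1 thus ?thesis using flag_R[OF sa] unfolding Dset_def p cmap_eq2 by simp
    next
      case 2 thus ?thesis using flag_L[OF sa] unfolding Dset_def p cmap_eq2 by simp
    next
      case 3 thus ?thesis using flag_U[OF sa] unfolding Dset_def p cmap_eq2 by simp
    next
      case 4 thus ?thesis using flag_D[OF sa] unfolding Dset_def p cmap_eq2 by simp
    qed
  next
    case False
    have "d \<notin> Dset E p" using False Dset_units by blast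
    moreover have "d \<notin> Dset cE (cmap V E p)"
    proof
      assume "d \<in> Dset cE (cmap V E p)"
      hence "unit_dist (cmap V E p) (fst (cmap V E p) + fst d, snd (cmap V E p) + snd d)"
        using iE_unit unfolding Dset_def by blast
      hence "d \<in> units" unfolding unit_dist_iff units_def by (cases d) (auto simp: prod_eq_iff)
      thus False using False by simp
    qed
    ultimately show ?thesis by simp
  qed
  thus ?thesis by blast
qed

lemma turn_eq: "surv p \<Longrightarrow> turning cV cE (cmap V E p) \<longleftrightarrow> turning V E p"
  by (rule turning_transfer) (auto simp: iV_eq Dset_eq survD)


lemma hpath_transfer:
  assumes sa: "surv (a,y)" and sb: "surv (b,y)" and ab: "a < b"
  shows "hpath E y a b \<longleftrightarrow> hpath cE (cy y) (cx a) (cx b)"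
proof
  assume h: "hpath E y a b"
  show "hpath cE (cy y) (cx a) (cx b)" unfolding hpath_def
  proof (intro allI impI)
    fix X assume X: "cx a \<le> X \<and> X < cx b"
    obtain x where x: "a \<le> x" "x < b" "\<not> C x" "cx x = X"
      using cnt_ivt[OF finC, of a b X] ab X by auto
    have "{(x,y),(x+1,y)} \<in> E" using h x unfolding hpath_def by auto
    hence "(x,y) \<in> V" using edgeE by blast
    hence sx: "surv (x,y)" using x(3) survD[OF sa] by (simp add: survivor_def)
    show "{(X, cy y), (X + 1, cy y)} \<in> cE" using flag_R[OF sx] \<open>{(x,y),(x+1,y)} \<in> E\<close> x(4) by simp
  qed
next
  assume h: "hpath cE (cy y) (cx a) (cx b)"
  show "hpath E y a b" unfolding hpath_def
  proof (intro allI impI)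
    fix x assume x: "a \<le> x \<and> x < b"
    define S where "S = {c. a \<le> c \<and> c \<le> x \<and> \<not> C c}"
    have fS: "finite S" unfolding S_def by (rule finite_subset[of _ "{a..x}"]) auto
    have aS: "a \<in> S" unfolding S_def using x survD[OF sa] by simp
    define x0 where "x0 = Max S"
    have x0S: "x0 \<in> S" unfolding x0_def using fS aS Max_in by blast
    have x0m: "\<And>c. c \<in> S \<Longrightarrow> c \<le> x0" unfolding x0_def using fS Max_ge by blast
    have nC0: "\<not> C x0" "a \<le> x0" "x0 \<le> x" using x0S unfolding S_def by auto
    have "cx a \<le> cx x0" using cnt_mono[OF finC nC0(2)] .
    moreover have "cx x0 < cx b" using cnt_strict[OF finC _ nC0(1)] nC0(3) x by simp
    ultimately have "{(cx x0, cy y), (cx x0 + 1, cy y)} \<in> cE" using h unfolding hpath_def by blast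
    then obtain a' b' y' where e: "a' < b'" "surv (a',y')" "surv (b',y')" "cx a' = cx x0" "cx b' = cx x0 + 1"
      "cy y' = cy y" "hpath E y' a' b'" using iE_h_elim by blast
    have a': "a' = x0" using cnt_eq_iff[OF finC] survD[OF e(2)] nC0(1) e(4) by auto
    have y': "y' = y" using cy_eq[of a' y' a y] e(2,6) sa by auto
    have "x < b'"
    proof (rule ccontr)
      assume "\<not> x < b'"
      hence "b' \<in> S" unfolding S_def using e(1) a' nC0(2) survD[OF e(3)] by auto
      thus False using x0m e(1) a' by fastforce
    qed
    thus "{(x, y), (x + 1, y)} \<in> E" using e(7) a' y' nC0(3) unfolding hpath_def by auto
  qed
qed

lemma vpath_transfer:
  assumes sa: "surv (x,a)" and sb: "surv (x,b)" and ab: "a < b"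
  shows "vpath E x a b \<longleftrightarrow> vpath cE (cx x) (cy a) (cy b)"
proof
  assume h: "vpath E x a b"
  show "vpath cE (cx x) (cy a) (cy b)" unfolding vpath_def
  proof (intro allI impI)
    fix Y assume Y: "cy a \<le> Y \<and> Y < cy b"
    obtain y where y: "a \<le> y" "y < b" "\<not> R y" "cy y = Y"
      using cnt_ivt[OF finR, of a b Y] ab Y by auto
    have "{(x,y),(x,y+1)} \<in> E" using h y unfolding vpath_def by auto
    hence "(x,y) \<in> V" using edgeE by blast
    hence sy: "surv (x,y)" using y(3) survD[OF sa] by (simp add: survivor_def)
    show "{(cx x, Y), (cx x, Y + 1)} \<in> cE" using flag_U[OF sy] \<open>{(x,y),(x,y+1)} \<in> E\<close> y(4) by simp
  qed
next
  assume h: "vpath cE (cx x) (cy a) (cy b)"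
  show "vpath E x a b" unfolding vpath_def
  proof (intro allI impI)
    fix y assume y: "a \<le> y \<and> y < b"
    define S where "S = {c. a \<le> c \<and> c \<le> y \<and> \<not> R c}"
    have fS: "finite S" unfolding S_def by (rule finite_subset[of _ "{a..y}"]) auto
    have aS: "a \<in> S" unfolding S_def using y survD[OF sa] by simp
    define y0 where "y0 = Max S"
    have y0S: "y0 \<in> S" unfolding y0_def using fS aS Max_in by blast
    have y0m: "\<And>c. c \<in> S \<Longrightarrow> c \<le> y0" unfolding y0_def using fS Max_ge by blast
    have nR0: "\<not> R y0" "a \<le> y0" "y0 \<le> y" using y0S unfolding S_def by auto
    have "cy a \<le> cy y0" using cnt_mono[OF finR nR0(2)] .
    moreover have "cy y0 < cy b" using cnt_strict[OF finR _ nR0(1)] nR0(3) y by simp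
    ultimately have "{(cx x, cy y0), (cx x, cy y0 + 1)} \<in> cE" using h unfolding vpath_def by blast
    then obtain a' b' x' where e: "a' < b'" "surv (x',a')" "surv (x',b')" "cy a' = cy y0" "cy b' = cy y0 + 1"
      "cx x' = cx x" "vpath E x' a' b'" using iE_v_elim by blast
    have a': "a' = y0" using cnt_eq_iff[OF finR] survD[OF e(2)] nR0(1) e(4) by auto
    have x': "x' = x" using cx_eq[of x' a' x a] e(2,6) sa by auto
    have "y < b'"
    proof (rule ccontr)
      assume "\<not> y < b'"
      hence "b' \<in> S" unfolding S_def using e(1) a' nR0(2) survD[OF e(3)] by auto
      thus False using y0m e(1) a' by fastforce
    qed
    thus "{(x, y), (x, y + 1)} \<in> E" using e(7) a' x' nR0(3) unfolding vpath_def by auto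
  qed
qed


lemma iV_surv: "A \<in> cV \<Longrightarrow> \<exists>w. surv w \<and> A = cmap V E w"
  unfolding iV_eq by blast

lemma seg_h:
  assumes ta: "turning V E (a,y)" and tb: "turning V E (b,y)" and ab: "a < b"
  shows "is_segment V E (a,y) (b,y) \<longleftrightarrow> is_segment cV cE (cx a, cy y) (cx b, cy y)"
proof -
  have sa: "surv (a,y)" and sb: "surv (b,y)" using ta tb turn_surv by auto
  have cab: "cx a < cx b" using cnt_strict[OF finC ab] survD[OF sa] by simp
  have ta': "turning cV cE (cx a, cy y)" and tb': "turning cV cE (cx b, cy y)"
    using turn_eq[OF sa] turn_eq[OF sb] ta tb by (simp_all add: cmap_eq2)
  have sp: "straight_path E (a,y) (b,y) \<longleftrightarrow> straight_path cE (cx a, cy y) (cx b, cy y)"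
    using sp_h[OF ab] sp_h[OF cab] hpath_transfer[OF sa sb ab] by simp
  have it: "(\<forall>w\<in>interior_pts (a,y) (b,y). \<not> turning V E w) \<longleftrightarrow>
            (\<forall>w\<in>interior_pts (cx a, cy y) (cx b, cy y). \<not> turning cV cE w)"
    unfolding int_h[OF ab] int_h[OF cab]
  proof safe
    fix X assume h: "\<forall>w\<in>{(x, y) |x. a < x \<and> x < b}. \<not> turning V E w"
      and X: "cx a < X" "X < cx b" and t: "turning cV cE (X, cy y)"
    have "(X, cy y) \<in> cV" using t by (simp add: turning_def)
    then obtain w where w: "surv w" "(X, cy y) = cmap V E w" using iV_surv by blast
    obtain x' y' where w': "w = (x',y')" by fastforce
    have "cy y' = cy y" "cx x' = X" using w unfolding w' cmap_eq2 by auto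
    hence y': "y' = y" using cy_eq[of x' y' a y] w(1) sa w' by auto
    have nC: "\<not> C x'" using survD[OF w(1)] w' by simp
    have "a < x'" using cnt_mono[OF finC, of x' a] X \<open>cx x' = X\<close> by (cases "a < x'") auto
    moreover have "x' < b" using cnt_mono[OF finC, of b x'] X \<open>cx x' = X\<close> by (cases "x' < b") auto
    moreover have "turning V E (x', y)" using turn_eq[OF w(1)] t w y' w' by simp
    ultimately show False using h by blast
  next
    fix x assume h: "\<forall>w\<in>{(X, cy y) |X. cx a < X \<and> X < cx b}. \<not> turning cV cE w"
      and x: "a < x" "x < b" and t: "turning V E (x, y)"
    have sx: "surv (x,y)" using t turn_surv by blast
    have "cx a < cx x" using cnt_strict[OF finC x(1)] survD[OF sa] by simp
    moreover have "cx x < cx b" using cnt_strict[OF finC x(2)] survD[OF sx] by simp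
    moreover have "turning cV cE (cx x, cy y)" using turn_eq[OF sx] t by (simp add: cmap_eq2)
    ultimately show False using h by blast
  qed
  show ?thesis unfolding is_segment_def using ta tb ta' tb' sp it by blast
qed

lemma seg_v:
  assumes ta: "turning V E (x,a)" and tb: "turning V E (x,b)" and ab: "a < b"
  shows "is_segment V E (x,a) (x,b) \<longleftrightarrow> is_segment cV cE (cx x, cy a) (cx x, cy b)"
proof -
  have sa: "surv (x,a)" and sb: "surv (x,b)" using ta tb turn_surv by auto
  have cab: "cy a < cy b" using cnt_strict[OF finR ab] survD[OF sa] by simp
  have ta': "turning cV cE (cx x, cy a)" and tb': "turning cV cE (cx x, cy b)"
    using turn_eq[OF sa] turn_eq[OF sb] ta tb by (simp_all add: cmap_eq2)
  have sp: "straight_path E (x,a) (x,b) \<longleftrightarrow> straight_path cE (cx x, cy a) (cx x, cy b)"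
    using sp_v[OF ab] sp_v[OF cab] vpath_transfer[OF sa sb ab] by simp
  have it: "(\<forall>w\<in>interior_pts (x,a) (x,b). \<not> turning V E w) \<longleftrightarrow>
            (\<forall>w\<in>interior_pts (cx x, cy a) (cx x, cy b). \<not> turning cV cE w)"
    unfolding int_v[OF ab] int_v[OF cab]
  proof safe
    fix Y assume h: "\<forall>w\<in>{(x, y) |y. a < y \<and> y < b}. \<not> turning V E w"
      and Y: "cy a < Y" "Y < cy b" and t: "turning cV cE (cx x, Y)"
    have "(cx x, Y) \<in> cV" using t by (simp add: turning_def)
    then obtain w where w: "surv w" "(cx x, Y) = cmap V E w" using iV_surv by blast
    obtain x' y' where w': "w = (x',y')" by fastforce
    have "cx x' = cx x" "cy y' = Y" using w unfolding w' cmap_eq2 by auto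
    hence x': "x' = x" using cx_eq[of x' y' x a] w(1) sa w' by auto
    have "a < y'" using cnt_mono[OF finR, of y' a] Y \<open>cy y' = Y\<close> by (cases "a < y'") auto
    moreover have "y' < b" using cnt_mono[OF finR, of b y'] Y \<open>cy y' = Y\<close> by (cases "y' < b") auto
    moreover have "turning V E (x, y')" using turn_eq[OF w(1)] t w x' w' by simp
    ultimately show False using h by blast
  next
    fix y assume h: "\<forall>w\<in>{(cx x, Y) |Y. cy a < Y \<and> Y < cy b}. \<not> turning cV cE w"
      and y: "a < y" "y < b" and t: "turning V E (x, y)"
    have sy: "surv (x,y)" using t turn_surv by blast
    have "cy a < cy y" using cnt_strict[OF finR y(1)] survD[OF sa] by simp
    moreover have "cy y < cy b" using cnt_strict[OF finR y(2)] survD[OF sy] by simp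
    moreover have "turning cV cE (cx x, cy y)" using turn_eq[OF sy] t by (simp add: cmap_eq2)
    ultimately show False using h by blast
  qed
  show ?thesis unfolding is_segment_def using ta tb ta' tb' sp it by blast
qed

lemma seg_eq:
  assumes tu: "turning V E u" and tv: "turning V E v"
  shows "is_segment V E u v \<longleftrightarrow> is_segment cV cE (cmap V E u) (cmap V E v)"
proof -
  obtain a y where u: "u = (a,y)" by fastforce
  obtain b y' where v: "v = (b,y')" by fastforce
  have su: "surv (a,y)" and sv: "surv (b,y')" using tu tv turn_surv u v by auto
  show ?thesis
  proof (cases "y = y'")
    case True
    show ?thesis
    proof (cases a b rule: linorder_cases)
      case less thus ?thesis using seg_h[OF _ _ less] tu tv unfolding u v True cmap_eq2 by simp
    next
      case greater thus ?thesis using seg_h[OF _ _ greater] tu tv seg_sym[of V E] seg_sym[of cV cE]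
        unfolding u v True cmap_eq2 by metis
    next
      case equal thus ?thesis unfolding u v True is_segment_def straight_path_def by simp
    qed
  next
    case False
    show ?thesis
    proof (cases "a = b")
      case True
      show ?thesis
      proof (cases y y' rule: linorder_cases)
        case less thus ?thesis using seg_v[OF _ _ less] tu tv unfolding u v True cmap_eq2 by simp
      next
        case greater thus ?thesis using seg_v[OF _ _ greater] tu tv seg_sym[of V E] seg_sym[of cV cE]
          unfolding u v True cmap_eq2 by metis
      qed (use False in simp)
    next
      case ab: False
      have "cx a \<noteq> cx b" using cx_eq[OF su sv] ab by simp
      moreover have "cy y \<noteq> cy y'" using cy_eq[OF su sv] False by simp
      ultimately show ?thesis using ab False unfolding u v cmap_eq2 is_segment_def straight_path_def by simp
    qed
  qed
qed

lemma gdist_le: "gdist (cmap V E u) (cmap V E v) \<le> gdist u v"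
proof -
  have "\<bar>cx (fst v) - cx (fst u)\<bar> \<le> \<bar>fst v - fst u\<bar>"
    using cnt_lip[OF finC, of "fst u" "fst v"] cnt_lip[OF finC, of "fst v" "fst u"]
      cnt_mono[OF finC, of "fst u" "fst v"] cnt_mono[OF finC, of "fst v" "fst u"]
    by (cases "fst u \<le> fst v") auto
  moreover have "\<bar>cy (snd v) - cy (snd u)\<bar> \<le> \<bar>snd v - snd u\<bar>"
    using cnt_lip[OF finR, of "snd u" "snd v"] cnt_lip[OF finR, of "snd v" "snd u"]
      cnt_mono[OF finR, of "snd u" "snd v"] cnt_mono[OF finR, of "snd v" "snd u"]
    by (cases "snd u \<le> snd v") auto
  ultimately show ?thesis unfolding gdist_def cmap_eq by (simp add: nat_mono)
qed


lemma connV: "\<forall>u\<in>V. \<forall>v\<in>V. (u, v) \<in> (edge_rel E)\<^sup>*"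
  using shape by (simp add: is_shape_def)

lemma conn_cols:
  assumes m: "m \<in> V" and r: "(m, w) \<in> (edge_rel E)\<^sup>*"
  shows "\<forall>c. min (fst m) (fst w) \<le> c \<and> c \<le> max (fst m) (fst w) \<longrightarrow> (\<exists>y. (c,y) \<in> V)"
  using r
proof induction
  case base
  show ?case using m by (metis max.idem min.idem order_antisym prod.collapse)
next
  case (step w z)
  have "{w, z} \<in> E" using step(2) by (simp add: edge_rel_def)
  hence zV: "z \<in> V" and u: "unit_dist w z" using edgeE by auto
  have d: "\<bar>fst w - fst z\<bar> \<le> 1" using u unfolding unit_dist_def by linarith
  show ?case
  proof (intro allI impI)
    fix c assume c: "min (fst m) (fst z) \<le> c \<and> c \<le> max (fst m) (fst z)"
    show "\<exists>y. (c, y) \<in> V"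
    proof (cases "min (fst m) (fst w) \<le> c \<and> c \<le> max (fst m) (fst w)")
      case True thus ?thesis using step(3) by blast
    next
      case False
      hence "c = fst z" using c d by (auto simp: min_def max_def abs_if split: if_splits)
      thus ?thesis using zV by (metis prod.collapse)
    qed
  qed
qed

lemma conn_rows:
  assumes m: "m \<in> V" and r: "(m, w) \<in> (edge_rel E)\<^sup>*"
  shows "\<forall>c. min (snd m) (snd w) \<le> c \<and> c \<le> max (snd m) (snd w) \<longrightarrow> (\<exists>x. (x,c) \<in> V)"
  using r
proof induction
  case base
  show ?case using m by (metis max.idem min.idem order_antisym prod.collapse)
next
  case (step w z)
  have "{w, z} \<in> E" using step(2) by (simp add: edge_rel_def)
  hence zV: "z \<in> V" and u: "unit_dist w z" using edgeE by auto
  have d: "\<bar>snd w - snd z\<bar> \<le> 1" using u unfolding unit_dist_def by linarith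
  show ?case
  proof (intro allI impI)
    fix c assume c: "min (snd m) (snd z) \<le> c \<and> c \<le> max (snd m) (snd z)"
    show "\<exists>x. (x, c) \<in> V"
    proof (cases "min (snd m) (snd w) \<le> c \<and> c \<le> max (snd m) (snd w)")
      case True thus ?thesis using step(3) by blast
    next
      case False
      hence "c = snd z" using c d by (auto simp: min_def max_def abs_if split: if_splits)
      thus ?thesis using zV by (metis prod.collapse)
    qed
  qed
qed

lemma finTP: "finite (turning_points V E)"
  by (rule finite_subset[OF _ finV]) (auto simp: turning_points_def turning_def)

lemma col_bound:
  assumes s: "surv (a,y)"
  shows "cx (Min (fst ` V)) \<le> cx a \<and> cx a < cx (Min (fst ` V)) + int (card (turning_points V E))"
proof -
  define xm where "xm = Min (fst ` V)"
  have aV: "(a,y) \<in> V" using survD[OF s] by simp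
  have ne: "fst ` V \<noteq> {}" using aV by blast
  have fV: "finite (fst ` V)" using finV by simp
  have "xm \<in> fst ` V" unfolding xm_def using Min_in[OF fV ne] .
  then obtain m where m: "m \<in> V" "fst m = xm" by blast
  have xa: "xm \<le> a" unfolding xm_def using Min_le[OF fV] aV by force
  define D where "D = {c. xm \<le> c \<and> c < a \<and> \<not> C c}"
  have diff: "cx a - cx xm = int (card D)" unfolding D_def using cnt_diff[OF finC xa] .
  have sub: "insert a D \<subseteq> fst ` turning_points V E"
  proof
    fix c assume c: "c \<in> insert a D"
    hence cr: "xm \<le> c \<and> c \<le> a" and nC: "\<not> C c" using xa survD[OF s] unfolding D_def by auto
    have "(m, (a,y)) \<in> (edge_rel E)\<^sup>*" using connV m aV by blast
    hence "\<exists>y'. (c,y') \<in> V" using conn_cols[OF m(1)] cr m(2) xa by auto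
    then obtain y'' where "turning V E (c,y'')" using nC unfolding comp_col_def by blast
    thus "c \<in> fst ` turning_points V E" unfolding turning_points_def by force
  qed
  have fD: "finite D" unfolding D_def by (rule finite_subset[of _ "{xm..a}"]) auto
  have "card (insert a D) \<le> card (fst ` turning_points V E)"
    by (rule card_mono[OF _ sub]) (simp add: finTP)
  also have "\<dots> \<le> card (turning_points V E)" by (rule card_image_le[OF finTP])
  finally have "card D + 1 \<le> card (turning_points V E)" using fD unfolding D_def by simp
  moreover have "cx xm \<le> cx a" using cnt_mono[OF finC xa] .
  ultimately show ?thesis using diff unfolding xm_def by linarith
qed

lemma row_bound:
  assumes s: "surv (x,a)"
  shows "cy (Min (snd ` V)) \<le> cy a \<and> cy a < cy (Min (snd ` V)) + int (card (turning_points V E))"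
proof -
  define xm where "xm = Min (snd ` V)"
  have aV: "(x,a) \<in> V" using survD[OF s] by simp
  have ne: "snd ` V \<noteq> {}" using aV by blast
  have fV: "finite (snd ` V)" using finV by simp
  have "xm \<in> snd ` V" unfolding xm_def using Min_in[OF fV ne] .
  then obtain m where m: "m \<in> V" "snd m = xm" by blast
  have xa: "xm \<le> a" unfolding xm_def using Min_le[OF fV] aV by force
  define D where "D = {c. xm \<le> c \<and> c < a \<and> \<not> R c}"
  have diff: "cy a - cy xm = int (card D)" unfolding D_def using cnt_diff[OF finR xa] .
  have sub: "insert a D \<subseteq> snd ` turning_points V E"
  proof
    fix c assume c: "c \<in> insert a D"
    hence cr: "xm \<le> c \<and> c \<le> a" and nR: "\<not> R c" using xa survD[OF s] unfolding D_def by auto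
    have "(m, (x,a)) \<in> (edge_rel E)\<^sup>*" using connV m aV by blast
    hence "\<exists>x'. (x',c) \<in> V" using conn_rows[OF m(1)] cr m(2) xa by auto
    then obtain x'' where "turning V E (x'',c)" using nR unfolding comp_row_def by blast
    thus "c \<in> snd ` turning_points V E" unfolding turning_points_def by force
  qed
  have fD: "finite D" unfolding D_def by (rule finite_subset[of _ "{xm..a}"]) auto
  have "card (insert a D) \<le> card (snd ` turning_points V E)"
    by (rule card_mono[OF _ sub]) (simp add: finTP)
  also have "\<dots> \<le> card (turning_points V E)" by (rule card_image_le[OF finTP])
  finally have "card D + 1 \<le> card (turning_points V E)" using fD unfolding D_def by simp
  moreover have "cy xm \<le> cy a" using cnt_mono[OF finR xa] .
  ultimately show ?thesis using diff unfolding xm_def by linarith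
qed

lemma square:
  "\<exists>x0 y0. \<forall>p\<in>cV. x0 \<le> fst p \<and> fst p < x0 + int (card (turning_points V E))
      \<and> y0 \<le> snd p \<and> snd p < y0 + int (card (turning_points V E))"
proof (intro exI ballI)
  fix p assume "p \<in> cV"
  then obtain w where w: "surv w" "p = cmap V E w" using iV_surv by blast
  obtain a y where wa: "w = (a,y)" by fastforce
  show "cx (Min (fst ` V)) \<le> fst p \<and> fst p < cx (Min (fst ` V)) + int (card (turning_points V E))
      \<and> cy (Min (snd ` V)) \<le> snd p \<and> snd p < cy (Min (snd ` V)) + int (card (turning_points V E))"
    using col_bound[of a y] row_bound[of a y] w wa by (simp add: cmap_eq2)
qed


lemma tp_image: "turning_points cV cE = cmap V E ` turning_points V E"
proof
  show "turning_points cV cE \<subseteq> cmap V E ` turning_points V E"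
  proof
    fix A assume "A \<in> turning_points cV cE"
    hence t: "turning cV cE A" by (simp add: turning_points_def)
    hence "A \<in> cV" by (simp add: turning_def)
    then obtain w where w: "surv w" "A = cmap V E w" using iV_surv by blast
    hence "turning V E w" using turn_eq t by simp
    thus "A \<in> cmap V E ` turning_points V E" using w by (auto simp: turning_points_def)
  qed
  show "cmap V E ` turning_points V E \<subseteq> turning_points cV cE"
    using turn_eq turn_surv by (auto simp: turning_points_def)
qed

lemma tp_surv: "turning_points V E \<subseteq> {p. surv p}"
  using turn_surv by (auto simp: turning_points_def)

lemma tp_bij: "bij_betw (cmap V E) (turning_points V E) (turning_points cV cE)"
  unfolding bij_betw_def tp_image using inj_on_subset[OF cmap_inj tp_surv] by simp

lemma ls_sub: "s \<in> line_segments V E \<Longrightarrow> s \<subseteq> turning_points V E"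
  by (auto simp: line_segments_def is_segment_def turning_points_def)

lemma ls_image: "line_segments cV cE = (\<lambda>s. cmap V E ` s) ` line_segments V E"
proof
  show "line_segments cV cE \<subseteq> (\<lambda>s. cmap V E ` s) ` line_segments V E"
  proof
    fix S assume "S \<in> line_segments cV cE"
    then obtain A B where S: "S = {A,B}" and sg: "is_segment cV cE A B"
      unfolding line_segments_def by blast
    have "A \<in> turning_points cV cE" "B \<in> turning_points cV cE"
      using sg by (auto simp: is_segment_def turning_points_def)
    then obtain u v where uv: "u \<in> turning_points V E" "v \<in> turning_points V E"
      "A = cmap V E u" "B = cmap V E v" unfolding tp_image by blast
    hence "is_segment V E u v" using seg_eq[of u v] sg by (simp add: turning_points_def)
    hence "{u,v} \<in> line_segments V E" unfolding line_segments_def by blast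
    moreover have "S = cmap V E ` {u,v}" using S uv by simp
    ultimately show "S \<in> (\<lambda>s. cmap V E ` s) ` line_segments V E" by blast
  qed
  show "(\<lambda>s. cmap V E ` s) ` line_segments V E \<subseteq> line_segments cV cE"
  proof
    fix S assume "S \<in> (\<lambda>s. cmap V E ` s) ` line_segments V E"
    then obtain u v where S: "S = cmap V E ` {u,v}" and sg: "is_segment V E u v"
      unfolding line_segments_def by blast
    have "turning V E u" "turning V E v" using sg by (auto simp: is_segment_def)
    hence "is_segment cV cE (cmap V E u) (cmap V E v)" using seg_eq sg by blast
    moreover have "S = {cmap V E u, cmap V E v}" using S by simp
    ultimately show "S \<in> line_segments cV cE" unfolding line_segments_def by blast
  qed
qed

lemma ls_bij: "bij_betw (\<lambda>s. cmap V E ` s) (line_segments V E) (line_segments cV cE)"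
proof -
  have "inj_on (\<lambda>s. cmap V E ` s) (line_segments V E)"
  proof (rule inj_onI)
    fix s t assume s: "s \<in> line_segments V E" and t: "t \<in> line_segments V E"
      and e: "cmap V E ` s = cmap V E ` t"
    have "s \<subseteq> {p. surv p}" "t \<subseteq> {p. surv p}" using ls_sub[OF s] ls_sub[OF t] tp_surv by auto
    thus "s = t" using inj_on_image_eq_iff[OF cmap_inj] e by blast
  qed
  thus ?thesis unfolding bij_betw_def ls_image by simp
qed

lemma order_pres:
  assumes "u \<in> turning_points V E" "v \<in> turning_points V E"
  shows "(fst u \<le> fst v \<longleftrightarrow> fst (cmap V E u) \<le> fst (cmap V E v))
       \<and> (snd u \<le> snd v \<longleftrightarrow> snd (cmap V E u) \<le> snd (cmap V E v))"
proof -
  have "surv u" "surv v" using assms tp_surv by auto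
  thus ?thesis using cnt_le_iff[OF finC, of "fst u" "fst v"] cnt_le_iff[OF finR, of "snd u" "snd v"]
    by (simp add: cmap_eq survD)
qed

end


theorem proposition2p2:
  fixes V :: "gpt set" and E :: "gpt set set" and k l :: nat
    and iV :: "gpt set" and iE :: "gpt set set"
  assumes shape: "is_shape V E"
    and k: "card (turning_points V E) = k"
    and l: "card (line_segments V E) = l"
    and iS: "compress_all V E = (iV, iE)"
  shows
    \<comment> \<open>(a)\<close>
    "card (turning_points iV iE) = k \<and> card (line_segments iV iE) = l
     \<comment> \<open>(b)\<close>
     \<and> (\<exists>f. bij_betw f (turning_points V E) (turning_points iV iE)
          \<and> bij_betw (\<lambda>s. f ` s) (line_segments V E) (line_segments iV iE)
          \<and> (\<forall>u\<in>turning_points V E. \<forall>v\<in>turning_points V E.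
               (is_segment V E u v \<longleftrightarrow> is_segment iV iE (f u) (f v))
             \<and> (is_segment V E u v \<longrightarrow> gdist (f u) (f v) \<le> gdist u v)
             \<and> (fst u \<le> fst v \<longleftrightarrow> fst (f u) \<le> fst (f v))
             \<and> (snd u \<le> snd v \<longleftrightarrow> snd (f u) \<le> snd (f v))))
     \<comment> \<open>(c)\<close>
     \<and> (\<exists>x0 y0. \<forall>p\<in>iV. x0 \<le> fst p \<and> fst p < x0 + int k \<and> y0 \<le> snd p \<and> snd p < y0 + int k)"
proof -
  interpret shp V E by (rule shp.intro[OF shape])
  have iV: "iV = fst (compress_all V E)" and iE: "iE = snd (compress_all V E)" using iS by auto
  have b1: "bij_betw (cmap V E) (turning_points V E) (turning_points iV iE)"
    unfolding iV iE by (rule tp_bij)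
  have b2: "bij_betw (\<lambda>s. cmap V E ` s) (line_segments V E) (line_segments iV iE)"
    unfolding iV iE by (rule ls_bij)
  have c1: "card (turning_points iV iE) = k" using bij_betw_same_card[OF b1] k by simp
  have c2: "card (line_segments iV iE) = l" using bij_betw_same_card[OF b2] l by simp
  have m: "\<forall>u\<in>turning_points V E. \<forall>v\<in>turning_points V E.
               (is_segment V E u v \<longleftrightarrow> is_segment iV iE (cmap V E u) (cmap V E v))
             \<and> (is_segment V E u v \<longrightarrow> gdist (cmap V E u) (cmap V E v) \<le> gdist u v)
             \<and> (fst u \<le> fst v \<longleftrightarrow> fst (cmap V E u) \<le> fst (cmap V E v))
             \<and> (snd u \<le> snd v \<longleftrightarrow> snd (cmap V E u) \<le> snd (cmap V E v))"
    unfolding iV iE using seg_eq gdist_le order_pres by (simp add: turning_points_def)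
  have sq: "\<exists>x0 y0. \<forall>p\<in>iV. x0 \<le> fst p \<and> fst p < x0 + int k \<and> y0 \<le> snd p \<and> snd p < y0 + int k"
    using square k unfolding iV by simp
  show ?thesis using c1 c2 b1 b2 m sq by blast
qed

end
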